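(* For all $T_0 \in \mathcal{G}(X)$, $\mathcal{S}_{T_0} \subset \mathcal{G}_{T_0}\setminus\mathcal{R}_{T_0}$; that is, no strongly mixing extension of $T_0$ is a rigid extension of $T_0$.
   Context: Let $(X,m)$ and $(Y,\nu)$ both be the unit interval with Lebesgue measure, and $(Z,\mu) = (X\times Y, m\times\nu)$. $\mathcal{G}(W)$ denotes the set of invertible measure-preserving transformations of a space $W$. $\mathcal{G}_{T_0} \subset \mathcal{G}(Z)$ is the set of transformations of the form $T(x,y) = (T_0x, T_x y)$ with $T_x \in \mathcal{G}(Y)$ (extensions of $T_0$); $T_0$ is identified with $T_0\times\mathrm{id}_Y$ on $Z$. For $f$ on $Z$, $T^nf = f\circ T^n$. $\mathbb{E}(\cdot|X)$ is conditional expectation onto the $\sigma$-algebra of sets $B\times Y$. $L^2(Z|X)$ is the space of $f\in L^2(Z)$ with $\mathbb{E}(|f|^2|X)^{1/2} \in L^\infty(X)$. $T\in\mathcal{G}_{T_0}$ is a strongly mixing extension of $T_0$ if for all $f,g\in L^2(Z|X)$, $\lim_{n\to\infty}\|\mathbb{E}(T^n f\cdot\overline{g}|X) - T_0^n\mathbb{E}(f|X)\mathbb{E}(\overline{g}|X)\|_{L^2(X)} = 0$; $\mathcal{S}_{T_0}$ is the set of such extensions. $T\in\mathcal{G}_{T_0}$ is a rigid extension of $T_0$ if there is a subsequence $n_k$ such that for all $f,g\in L^2(Z|X)$, $\lim_{k\to\infty}\|\mathbb{E}(T^{n_k}f\cdot\overline{g}|X) - \mathbb{E}(T_0^{n_k}f\cdot\overline{g}|X)\|_{L^2(X)}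 = 0$; $\mathcal{R}_{T_0}$ is the set of rigid extensions. *)

theory Defs
  imports "HOL-Analysis.Analysis" "HOL-Probability.Probability"
begin

text \<open>The unit interval with Lebesgue measure; X = Y = this space, Z = X x Y.\<close>
definition UI :: "real measure" where
  "UI = lebesgue_on {0..1}"

definition ZZ :: "(real \<times> real) measure" where
  "ZZ = UI \<Otimes>\<^sub>M UI"

definition mp_trans :: "'a measure \<Rightarrow> ('a \<Rightarrow> 'a) \<Rightarrow> bool" where
  "mp_trans M T \<longleftrightarrow> T \<in> measurable M M \<and> distr M M T = M"

definition invmp :: "'a measure \<Rightarrow> ('a \<Rightarrow> 'a) set" where
  "invmp M = {T. bij_betw T (space M) (space M) \<and> mp_trans M T
                 \<and> mp_trans M (the_inv_into (space M) T)}"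

text \<open>The sigma-algebra of sets B x Y (B measurable in X), as a sub-algebra of Z.\<close>
definition FX :: "(real \<times> real) measure" where
  "FX = vimage_algebra (space ZZ) fst UI"

definition cond_expX :: "(real \<times> real \<Rightarrow> complex) \<Rightarrow> (real \<times> real \<Rightarrow> complex)" where
  "cond_expX f = (\<lambda>z. complex_of_real (real_cond_exp ZZ FX (\<lambda>w. Re (f w)) z)
                      + \<i> * complex_of_real (real_cond_exp ZZ FX (\<lambda>w. Im (f w)) z))"

definition L2ZX :: "(real \<times> real \<Rightarrow> complex) set" where
  "L2ZX = {f. f \<in> borel_measurable ZZ \<and> integrable ZZ (\<lambda>z. (cmod (f z))\<^sup>2)
              \<and> (\<exists>C. AE z in ZZ. sqrt (real_cond_exp ZZ FX (\<lambda>w. (cmod (f w))\<^sup>2) z) \<le> C)}"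

definition L2sq :: "(real \<times> real \<Rightarrow> complex) \<Rightarrow> ennreal" where
  "L2sq h = (\<integral>\<^sup>+ z. ennreal ((cmod (h z))\<^sup>2) \<partial>ZZ)"

definition liftX :: "(real \<Rightarrow> real) \<Rightarrow> (real \<times> real \<Rightarrow> real \<times> real)" where
  "liftX T0 = (\<lambda>(x, y). (T0 x, y))"

definition G_ext :: "(real \<Rightarrow> real) \<Rightarrow> (real \<times> real \<Rightarrow> real \<times> real) set" where
  "G_ext T0 = {T. T \<in> invmp ZZ \<and>
      (\<exists>S. \<forall>x\<in>space UI. S x \<in> invmp UI \<and> (\<forall>y\<in>space UI. T (x, y) = (T0 x, S x y)))}"

definition S_ext :: "(real \<Rightarrow> real) \<Rightarrow> (real \<times> real \<Rightarrow> real \<times> real) set" where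
  "S_ext T0 = {T \<in> G_ext T0. \<forall>f\<in>L2ZX. \<forall>g\<in>L2ZX.
      (\<lambda>n. L2sq (\<lambda>z. cond_expX (\<lambda>w. f ((T ^^ n) w) * cnj (g w)) z
                    - cond_expX f ((liftX T0 ^^ n) z) * cond_expX (\<lambda>w. cnj (g w)) z))
      \<longlonglongrightarrow> 0}"

definition R_ext :: "(real \<Rightarrow> real) \<Rightarrow> (real \<times> real \<Rightarrow> real \<times> real) set" where
  "R_ext T0 = {T \<in> G_ext T0. \<exists>nk::nat \<Rightarrow> nat. strict_mono nk \<and> (\<forall>f\<in>L2ZX. \<forall>g\<in>L2ZX.
      (\<lambda>k. L2sq (\<lambda>z. cond_expX (\<lambda>w. f ((T ^^ nk k) w) * cnj (g w)) z
                    - cond_expX (\<lambda>w. f ((liftX T0 ^^ nk k) w) * cnj (g w)) z))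
      \<longlonglongrightarrow> 0)}"

end

theory Submission imports Defs begin

lemma spUI: "space UI = {0..1}" unfolding UI_def by simp

lemma finUI: "finite_measure UI" unfolding UI_def
  by (rule finite_measure_lebesgue_on) simp

lemma measUI: "measure UI {0..1} = 1" "measure UI {1/2<..1} = 1/2"
proof -
  have "measure UI {0..1} = measure lebesgue {0..(1::real)}" unfolding UI_def
    by (rule measure_restrict_space) auto
  then show "measure UI {0..1} = 1" by simp
  have "measure UI {1/2<..1} = measure lebesgue {1/2<..(1::real)}" unfolding UI_def
    by (rule measure_restrict_space) auto
  then show "measure UI {1/2<..1} = 1/2" by simp
qed

lemma setsUI: "{1/2<..(1::real)} \<in> sets UI"
  unfolding UI_def by (auto simp: sets_restrict_space_iff)

definition hh :: "real \<Rightarrow> real" where "hh y = 1 - 2 * indicator {1/2<..(1::real)} y"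

lemma hh_sq: "(hh y)\<^sup>2 = 1"
  unfolding hh_def indicator_def by (auto simp: power2_eq_square)

lemma hh_meas[measurable]: "hh \<in> borel_measurable UI"
proof -
  have "indicator {1/2<..(1::real)} \<in> borel_measurable UI"
    using setsUI by (rule borel_measurable_indicator)
  then show ?thesis unfolding hh_def by measurable
qed

lemma hh_int: "integral\<^sup>L UI hh = 0"
proof -
  interpret finite_measure UI by (rule finUI)
  have "integral\<^sup>L UI hh = integral\<^sup>L UI (\<lambda>_. 1) - 2 * integral\<^sup>L UI (indicator {1/2<..(1::real)})"
    unfolding hh_def using setsUI
    by (subst Bochner_Integration.integral_diff) (auto intro!: integrable_real_indicator simp: emeasure_eq_measure)
  moreover have "{1/2<..(1::real)} \<inter> {0..1} = {1/2<..1}" by auto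
  ultimately show ?thesis using measUI setsUI spUI by simp
qed

lemma spZZ: "space ZZ = {0..1} \<times> {0..1}" unfolding ZZ_def by (simp add: space_pair_measure spUI)

lemma pairUI: "pair_sigma_finite UI UI"
proof -
  interpret finite_measure UI by (rule finUI)
  show ?thesis by unfold_locales
qed

lemma finZZ: "finite_measure ZZ"
proof -
  interpret finite_measure UI by (rule finUI)
  have "emeasure ZZ (space ZZ) = emeasure UI (space UI) * emeasure UI (space UI)"
    unfolding ZZ_def space_pair_measure by (rule emeasure_pair_measure_Times) auto
  then show ?thesis by (intro finite_measureI) (simp add: ennreal_mult_eq_top_iff)
qed

lemma emZZ: "emeasure ZZ (space ZZ) = 1"
proof -
  interpret finite_measure UI by (rule finUI)
  have "emeasure ZZ (space ZZ) = emeasure UI (space UI) * emeasure UI (space UI)"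
    unfolding ZZ_def space_pair_measure by (rule emeasure_pair_measure_Times) auto
  moreover have "emeasure UI (space UI) = 1"
    using measUI spUI finUI by (metis ennreal_1 finite_measure.emeasure_eq_measure)
  ultimately show ?thesis by simp
qed

lemma subFX: "subalgebra ZZ FX"
  unfolding subalgebra_def FX_def
proof (intro conjI)
  show "space (vimage_algebra (space ZZ) fst UI) = space ZZ" by simp
  have "fst \<in> measurable ZZ UI" unfolding ZZ_def by simp
  then show "sets (vimage_algebra (space ZZ) fst UI) \<subseteq> sets ZZ"
    by (simp add: measurable_iff_sets)
qed

lemma sfFX: "sigma_finite_subalgebra ZZ FX"
proof -
  interpret finite_measure ZZ by (rule finZZ)
  have "finite_measure_subalgebra ZZ FX" by unfold_locales (rule subFX)
  then show ?thesis by (rule finite_measure_subalgebra_is_sigma_finite)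
qed

lemma ce_zero: "AE z in ZZ. real_cond_exp ZZ FX (\<lambda>w. hh (snd w)) z = 0"
proof -
  interpret sigma_finite_subalgebra ZZ FX by (rule sfFX)
  interpret pair_sigma_finite UI UI by (rule pairUI)
  interpret finite_measure ZZ by (rule finZZ)
  have hm[measurable]: "(\<lambda>w. hh (snd w)) \<in> borel_measurable ZZ" unfolding ZZ_def by measurable
  have hb: "\<And>w. \<bar>hh w\<bar> \<le> 1" unfolding hh_def indicator_def by auto
  have hint: "integrable ZZ (\<lambda>w. hh (snd w))"
    by (rule integrable_const_bound[where B=1]) (auto simp: hb)
  show ?thesis
  proof (rule real_cond_exp_charact)
    fix A assume "A \<in> sets FX"
    then obtain B where B: "B \<in> sets UI" and AB: "A = fst -` B \<inter> space ZZ"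
      unfolding FX_def by (subst (asm) sets_vimage_algebra2) (auto simp: spZZ spUI)
    have Bm[measurable]: "B \<in> sets UI" by (rule B)
    have "(LINT x:A|ZZ. hh (snd x)) = (\<integral>z. (\<lambda>(x,y). indicator B x * hh y) z \<partial>ZZ)"
      unfolding set_lebesgue_integral_def AB
      by (rule Bochner_Integration.integral_cong) (auto simp: indicator_def)
    also have "\<dots> = (\<integral>x. (\<integral>y. indicator B x * hh y \<partial>UI) \<partial>UI)"
      unfolding ZZ_def
    proof (rule integral_fst[symmetric])
      have ib: "\<And>x y. \<bar>indicator B x * hh y\<bar> \<le> (1::real)" using hb by (auto simp: indicator_def)
      show "integrable (UI \<Otimes>\<^sub>M UI) (\<lambda>(x, y). indicator B x * hh y)"
        using finZZ unfolding ZZ_def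
        by (intro finite_measure.integrable_const_bound[where B=1]) (auto intro!: AE_I2 simp: ib split: prod.split)
    qed
    also have "\<dots> = 0" by (simp add: hh_int)
    finally show "(LINT x:A|ZZ. hh (snd x)) = (LINT x:A|ZZ. 0)" by simp
  qed (auto simp: hint)
qed

lemma ce_const: "AE z in ZZ. real_cond_exp ZZ FX (\<lambda>w. c) z = c"
proof -
  interpret sigma_finite_subalgebra ZZ FX by (rule sfFX)
  interpret finite_measure ZZ by (rule finZZ)
  show ?thesis by (rule real_cond_exp_F_meas) auto
qed

definition f0 :: "real \<times> real \<Rightarrow> complex" where
  "f0 z = complex_of_real (hh (snd z))"

lemma f0_meas[measurable]: "f0 \<in> borel_measurable ZZ"
  unfolding f0_def ZZ_def by measurable

lemma f0_sq: "(cmod (f0 z))\<^sup>2 = 1"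
  unfolding f0_def by (simp add: hh_sq)

lemma f0_cnj: "f0 z * cnj (f0 z) = 1"
proof -
  have "f0 z * cnj (f0 z) = complex_of_real ((hh (snd z))\<^sup>2)"
    unfolding f0_def by (simp add: power2_eq_square)
  then show ?thesis by (simp add: hh_sq)
qed

lemma cnj_f0: "(\<lambda>w. cnj (f0 w)) = f0"
  unfolding f0_def by auto

lemma f0_L2: "f0 \<in> L2ZX"
proof -
  interpret finite_measure ZZ by (rule finZZ)
  have e: "(\<lambda>w. (cmod (f0 w))\<^sup>2) = (\<lambda>w. 1)" by (simp add: f0_sq)
  have "AE z in ZZ. sqrt (real_cond_exp ZZ FX (\<lambda>w. (cmod (f0 w))\<^sup>2) z) \<le> 1"
    using ce_const[of 1] unfolding e by eventually_elim simp
  then have hC: "\<exists>C. AE z in ZZ. sqrt (real_cond_exp ZZ FX (\<lambda>w. (cmod (f0 w))\<^sup>2) z) \<le> C"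
    by blast
  have hi: "integrable ZZ (\<lambda>z. (cmod (f0 z))\<^sup>2)" by (simp add: f0_sq)
  show ?thesis unfolding L2ZX_def mem_Collect_eq using f0_meas hi hC by blast
qed

lemma ce_meas[measurable]: "cond_expX g \<in> borel_measurable ZZ"
  unfolding cond_expX_def by measurable

lemma ce_f0: "AE z in ZZ. cond_expX f0 z = 0"
proof -
  have e1: "(\<lambda>w. Re (f0 w)) = (\<lambda>w. hh (snd w))" "(\<lambda>w. Im (f0 w)) = (\<lambda>w. 0)"
    unfolding f0_def by auto
  show ?thesis using ce_zero ce_const[of 0]
    unfolding cond_expX_def e1 by eventually_elim simp
qed

lemma ce_one: "AE z in ZZ. cond_expX (\<lambda>w. 1) z = 1"
proof -
  have e1: "(\<lambda>w. Re ((\<lambda>w. 1::complex) w)) = (\<lambda>w. 1)" "(\<lambda>w. Im ((\<lambda>w. 1::complex) w)) = (\<lambda>w. 0)"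
    by auto
  show ?thesis using ce_const[of 1] ce_const[of 0]
    unfolding cond_expX_def e1 by eventually_elim simp
qed

lemma lift_snd: "snd ((liftX T0 ^^ n) w) = snd w"
  by (induction n) (auto simp: liftX_def split: prod.split)

lemma lift_meas:
  assumes [measurable]: "T0 \<in> measurable UI UI"
  shows "liftX T0 \<in> measurable ZZ ZZ"
proof -
  have "liftX T0 = (\<lambda>z. (T0 (fst z), snd z))" unfolding liftX_def by (auto split: prod.split)
  then show ?thesis unfolding ZZ_def by simp
qed

lemma ineq2: "cmod (a - b) \<le> 1 \<Longrightarrow> cmod (a - b) = 1 \<Longrightarrow> 1 \<le> 2 * (cmod a)\<^sup>2 + 2 * (cmod b)\<^sup>2"
proof -
  assume h: "cmod (a - b) = 1"
  have "cmod (a - b) \<le> cmod a + cmod b" by (rule norm_triangle_ineq4)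
  then have "1 \<le> (cmod a + cmod b)\<^sup>2" using h
    by (metis norm_ge_zero one_le_power power_mono one_power2)
  also have "\<dots> \<le> 2 * (cmod a)\<^sup>2 + 2 * (cmod b)\<^sup>2"
    using sum_squares_ge_zero[of "cmod a - cmod b" 0] by (simp add: power2_eq_square algebra_simps)
  finally show ?thesis .
qed

theorem lemma4p2:
  assumes "T0 \<in> invmp UI"
  shows "S_ext T0 \<subseteq> G_ext T0 - R_ext T0"
proof
  fix T assume TS: "T \<in> S_ext T0"
  have TG: "T \<in> G_ext T0" using TS unfolding S_ext_def by auto
  have T0m[measurable]: "T0 \<in> measurable UI UI" using assms unfolding invmp_def mp_trans_def by auto
  have Lm[measurable]: "\<And>n. (liftX T0 ^^ n) \<in> measurable ZZ ZZ"
    by (rule measurable_compose_n) (rule lift_meas[OF T0m])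
  define A where "A n z = cond_expX (\<lambda>w. f0 ((T ^^ n) w) * cnj (f0 w)) z
                    - cond_expX f0 ((liftX T0 ^^ n) z) * cond_expX (\<lambda>w. cnj (f0 w)) z" for n z
  have Aconv: "(\<lambda>n. L2sq (A n)) \<longlonglongrightarrow> 0"
    using TS f0_L2 unfolding S_ext_def A_def by blast
  have Am[measurable]: "\<And>n. A n \<in> borel_measurable ZZ" unfolding A_def by measurable
  have "T \<notin> R_ext T0"
  proof
    assume "T \<in> R_ext T0"
    then obtain nk :: "nat \<Rightarrow> nat" where nk: "strict_mono nk" and
      conv: "\<forall>f\<in>L2ZX. \<forall>g\<in>L2ZX.
      (\<lambda>k. L2sq (\<lambda>z. cond_expX (\<lambda>w. f ((T ^^ nk k) w) * cnj (g w)) z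
                    - cond_expX (\<lambda>w. f ((liftX T0 ^^ nk k) w) * cnj (g w)) z))
      \<longlonglongrightarrow> 0" unfolding R_ext_def by blast
    define B where "B k z = cond_expX (\<lambda>w. f0 ((T ^^ nk k) w) * cnj (f0 w)) z
                    - cond_expX (\<lambda>w. f0 ((liftX T0 ^^ nk k) w) * cnj (f0 w)) z" for k z
    have Bconv: "(\<lambda>k. L2sq (B k)) \<longlonglongrightarrow> 0"
      using conv f0_L2 unfolding B_def by blast
    have Bm[measurable]: "\<And>k. B k \<in> borel_measurable ZZ" unfolding B_def by measurable
    have Aconv': "(\<lambda>k. L2sq (A (nk k))) \<longlonglongrightarrow> 0"
      using LIMSEQ_subseq_LIMSEQ[OF Aconv nk] by (simp add: comp_def)
    have lim: "(\<lambda>k. 2 * L2sq (A (nk k)) + 2 * L2sq (B k)) \<longlonglongrightarrow> 2 * 0 + 2 * 0"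
      by (intro tendsto_intros Aconv' Bconv) simp_all
    have key: "1 \<le> 2 * L2sq (A (nk k)) + 2 * L2sq (B k)" for k
    proof -
      let ?n = "nk k"
      have eqR: "(\<lambda>w. f0 ((liftX T0 ^^ ?n) w) * cnj (f0 w)) = (\<lambda>w. 1)"
      proof
        fix w
        have "f0 ((liftX T0 ^^ ?n) w) = f0 w" unfolding f0_def by (simp add: lift_snd)
        then show "f0 ((liftX T0 ^^ ?n) w) * cnj (f0 w) = 1" by (simp add: f0_cnj)
      qed
      have AE1: "AE z in ZZ. 1 \<le> ennreal (2 * (cmod (A ?n z))\<^sup>2) + ennreal (2 * (cmod (B k z))\<^sup>2)"
        using ce_one ce_f0
      proof eventually_elim
        case (elim z)
        have "A ?n z - B k z = 1"
          unfolding A_def B_def eqR cnj_f0 using elim by simp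
        then have "1 \<le> 2 * (cmod (A ?n z))\<^sup>2 + 2 * (cmod (B k z))\<^sup>2"
          by (intro ineq2) auto
        then have "ennreal 1 \<le> ennreal (2 * (cmod (A ?n z))\<^sup>2 + 2 * (cmod (B k z))\<^sup>2)"
          by (rule ennreal_leI)
        then show ?case by (simp add: ennreal_plus)
      qed
      have "(1::ennreal) = (\<integral>\<^sup>+ z. 1 \<partial>ZZ)" using emZZ by simp
      also have "\<dots> \<le> (\<integral>\<^sup>+ z. ennreal (2 * (cmod (A ?n z))\<^sup>2) + ennreal (2 * (cmod (B k z))\<^sup>2) \<partial>ZZ)"
        by (rule nn_integral_mono_AE[OF AE1])
      also have "\<dots> = (\<integral>\<^sup>+ z. ennreal (2 * (cmod (A ?n z))\<^sup>2) \<partial>ZZ) + (\<integral>\<^sup>+ z. ennreal (2 * (cmod (B k z))\<^sup>2) \<partial>ZZ)"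
        by (rule nn_integral_add) auto
      also have "\<dots> = 2 * L2sq (A ?n) + 2 * L2sq (B k)"
        unfolding L2sq_def
        by (simp add: ennreal_mult nn_integral_cmult)
      finally show ?thesis .
    qed
    have "(1::ennreal) \<le> 2 * 0 + 2 * 0"
      by (rule LIMSEQ_le_const[OF lim]) (auto intro: key)
    then show False by simp
  qed
  then show "T \<in> G_ext T0 - R_ext T0" using TG by simp
qed

end
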